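(* Let $n\neq 1$ be a real number, $k_n=n-1$, and $k_0\in\mathbb{R}$. On the phase space with canonical coordinates $(r,\phi,p_r,p_\phi)$, $r>0$, consider $$H_{na}=\tfrac12 r^{2n}\Big(p_r^2+\tfrac{p_\phi^2}{r^2}\Big)+\frac{k_0}{r^{2k_n}}.$$ Let $$P_1=r^n\Big(p_r\cos(k_n\phi)+\tfrac1r p_\phi\sin(k_n\phi)\Big),\qquad P_2=r^n\Big(p_r\sin(k_n\phi)-\tfrac1r p_\phi\cos(k_n\phi)\Big),$$ and define $$J_1=p_\phi,\quad J_{11}=P_1^2+\frac{2k_0}{r^{2k_n}}\cos^2(k_n\phi),\quad J_{22}=P_2^2+\frac{2k_0}{r^{2k_n}}\sin^2(k_n\phi),\quad J_{12}=P_1P_2+\frac{2k_0}{r^{2k_n}}\cos(k_n\phi)\sin(k_n\phi).$$ Then $J_1,J_{11},J_{22},J_{12}$ are constants of motion of $H_{na}$ (they Poisson commute with $H_{na}$), and moreover $dJ_1\wedge dJ_{11}\wedge dJ_{22}\neq 0$, $\{J_{11},J_{22}\}=0$, and $H_{na}=\tfrac12(J_{11}+J_{22})$. In particular $H_{na}$ is superintegrable.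
   Context: The Poisson bracket is the canonical one: $\{F,G\}=\partial_rF\,\partial_{p_r}G-\partial_{p_r}F\,\partial_rG+\partial_\phi F\,\partial_{p_\phi}G-\partial_{p_\phi}F\,\partial_\phi G$. A constant of motion of $H$ is a function $F$ with $\{F,H\}=0$. A two-degree-of-freedom Hamiltonian is superintegrable if it admits two Poisson-commuting integrals and a third functionally independent integral. *)

theory Defs
  imports "HOL-Analysis.Analysis"
begin

text \<open>Phase-space functions in canonical coordinates (r, phi, p_r, p_phi); the phase space is r > 0.\<close>
type_synonym pfun = "real \<Rightarrow> real \<Rightarrow> real \<Rightarrow> real \<Rightarrow> real"

definition d_r :: "pfun \<Rightarrow> pfun" where
  "d_r F r phi pr pphi = deriv (\<lambda>x. F x phi pr pphi) r"
definition d_phi :: "pfun \<Rightarrow> pfun" where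
  "d_phi F r phi pr pphi = deriv (\<lambda>x. F r x pr pphi) phi"
definition d_pr :: "pfun \<Rightarrow> pfun" where
  "d_pr F r phi pr pphi = deriv (\<lambda>x. F r phi x pphi) pr"
definition d_pphi :: "pfun \<Rightarrow> pfun" where
  "d_pphi F r phi pr pphi = deriv (\<lambda>x. F r phi pr x) pphi"

definition poisson :: "pfun \<Rightarrow> pfun \<Rightarrow> pfun" where
  "poisson F G r phi pr pphi =
     d_r F r phi pr pphi * d_pr G r phi pr pphi - d_pr F r phi pr pphi * d_r G r phi pr pphi
   + d_phi F r phi pr pphi * d_pphi G r phi pr pphi - d_pphi F r phi pr pphi * d_phi G r phi pr pphi"

definition smooth_enough :: "pfun \<Rightarrow> bool" where
  "smooth_enough F \<longleftrightarrow> (\<forall>r phi pr pphi. r > 0 \<longrightarrow>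
      (\<lambda>x. F x phi pr pphi) differentiable (at r) \<and>
      (\<lambda>x. F r x pr pphi) differentiable (at phi) \<and>
      (\<lambda>x. F r phi x pphi) differentiable (at pr) \<and>
      (\<lambda>x. F r phi pr x) differentiable (at pphi))"

definition const_of_motion :: "pfun \<Rightarrow> pfun \<Rightarrow> bool" where
  "const_of_motion F H \<longleftrightarrow> (\<forall>r phi pr pphi. r > 0 \<longrightarrow> poisson F H r phi pr pphi = 0)"

definition wedge3_nonzero :: "pfun \<Rightarrow> pfun \<Rightarrow> pfun \<Rightarrow> bool" where
  "wedge3_nonzero F1 F2 F3 \<longleftrightarrow> (\<exists>r phi pr pphi. r > 0 \<and>
     (\<forall>a b c. (\<forall>D \<in> {d_r, d_phi, d_pr, d_pphi}.
          a * D F1 r phi pr pphi + b * D F2 r phi pr pphi + c * D F3 r phi pr pphi = 0)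
        \<longrightarrow> a = 0 \<and> b = 0 \<and> c = 0))"

definition superintegrable :: "pfun \<Rightarrow> bool" where
  "superintegrable H \<longleftrightarrow> (\<exists>F1 F2 F3.
     smooth_enough F1 \<and> smooth_enough F2 \<and> smooth_enough F3 \<and>
     const_of_motion F1 H \<and> const_of_motion F2 H \<and> const_of_motion F3 H \<and>
     (\<forall>r phi pr pphi. r > 0 \<longrightarrow> poisson F1 F2 r phi pr pphi = 0) \<and>
     wedge3_nonzero F1 F2 F3)"

end

theory Submission
  imports Defs
begin

lemma alg:
 fixes r t c b pr pphi kn k0 n w S2 :: real
 assumes r: "r>0"
 and t: "t>0"
 and cs: "c^2+b^2=1"
 and nk: "n = kn+1"
 and w: "w = t^2/r^2"
 and S2: "S2 = t^2"
 and "P1 = t*(pr*c + 1/r*pphi*b)"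
 and "P2 = t*(pr*b - 1/r*pphi*c)"
 and "P1r = n * t / r * (pr * c + pphi * b / r) - t * pphi * b / r^2"
 and "P1p = kn * t * (- pr * b + pphi * c / r)"
 and "P1q = t * c"
 and "P1s = t * b / r"
 and "P2r = n * t / r * (pr * b - pphi * c / r) + t * pphi * c / r^2"
 and "P2p = kn * t * (pr * c + pphi * b / r)"
 and "P2q = t * b"
 and "P2s = -t * c / r"
 and "Hr = (2*n) * S2 / r * (pr^2 + pphi^2/r^2)/2 + S2 * (- 2*pphi^2/r^3)/2 - 2*kn*k0/(r*w)"
 and "Hp = 0"
 and "Hq = S2 * pr"
 and "Hs = S2 * pphi / r^2"
 and "J11r = 2*P1*P1r - 4*kn*k0*c^2/(r*w)"
 and "J11p = 2*P1*P1p - 4*k0*kn*c*b/w"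
 and "J11q = 2*P1*P1q"
 and "J11s = 2*P1*P1s"
 and "J22r = 2*P2*P2r - 4*kn*k0*b^2/(r*w)"
 and "J22p = 2*P2*P2p + 4*k0*kn*c*b/w"
 and "J22q = 2*P2*P2q"
 and "J22s = 2*P2*P2s"
 and "J12r = P1r*P2 + P1*P2r - 4*kn*k0*c*b/(r*w)"
 and "J12p = P1p*P2 + P1*P2p + 2*k0*kn*(c^2-b^2)/w"
 and "J12q = P1q*P2 + P1*P2q"
 and "J12s = P1s*P2 + P1*P2s"
 shows "J11r * Hq - J11q * Hr + J11p * Hs - J11s * Hp = 0"
 and "J22r * Hq - J22q * Hr + J22p * Hs - J22s * Hp = 0"
 and "J12r * Hq - J12q * Hr + J12p * Hs - J12s * Hp = 0"
 and "J11r * J22q - J11q * J22r + J11p * J22s - J11s * J22p = 0"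
  subgoal using r t cs apply (simp only: assms(4-)) by (simp add: field_simps power2_eq_square power3_eq_cube)
  subgoal using r t cs apply (simp only: assms(4-)) by (simp add: field_simps power2_eq_square power3_eq_cube)
  subgoal using r t cs apply (simp only: assms(4-)) by (simp add: field_simps power2_eq_square power3_eq_cube)
  subgoal using r t cs apply (simp only: assms(4-)) by (simp add: field_simps power2_eq_square power3_eq_cube)
  done

lemma point:
  fixes n k0 kn r phi pr pphi :: real and H J11 J22 J12 :: pfun
  assumes r: "r > 0" and hkn: "kn = n - 1"
    and hH: "H = (\<lambda>r phi pr pphi. 1/2 * r powr (2*n) * (pr^2 + pphi^2 / r^2) + k0 / r powr (2*kn))"
    and hJ11: "J11 = (\<lambda>r phi pr pphi. (r powr n * (pr * cos (kn*phi) + 1/r * pphi * sin (kn*phi)))^2 + 2*k0 / r powr (2*kn) * (cos (kn*phi))^2)"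
    and hJ22: "J22 = (\<lambda>r phi pr pphi. (r powr n * (pr * sin (kn*phi) - 1/r * pphi * cos (kn*phi)))^2 + 2*k0 / r powr (2*kn) * (sin (kn*phi))^2)"
    and hJ12: "J12 = (\<lambda>r phi pr pphi. (r powr n * (pr * cos (kn*phi) + 1/r * pphi * sin (kn*phi))) * (r powr n * (pr * sin (kn*phi) - 1/r * pphi * cos (kn*phi)))
                        + 2*k0 / r powr (2*kn) * cos (kn*phi) * sin (kn*phi))"
  shows
    Hr: "d_r H r phi pr pphi = (2*n) * (r powr (2*n)) / r * (pr^2 + pphi^2/r^2)/2 + (r powr (2*n)) * (- 2*pphi^2/r^3)/2 - 2*kn*k0/(r*(r powr (2*kn)))"
    and Hp: "d_phi H r phi pr pphi = 0"
    and Hq: "d_pr H r phi pr pphi = (r powr (2*n)) * pr"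
    and Hs: "d_pphi H r phi pr pphi = (r powr (2*n)) * pphi / r^2"
    and J11r: "d_r J11 r phi pr pphi = 2*((r powr n)*(pr*(cos (kn*phi)) + 1/r*pphi*(sin (kn*phi))))*(n * (r powr n) / r * (pr * (cos (kn*phi)) + pphi * (sin (kn*phi)) / r) - (r powr n) * pphi * (sin (kn*phi)) / r^2) - 4*kn*k0*(cos (kn*phi))^2/(r*(r powr (2*kn)))"
    and J11p: "d_phi J11 r phi pr pphi = 2*((r powr n)*(pr*(cos (kn*phi)) + 1/r*pphi*(sin (kn*phi))))*(kn * (r powr n) * (- pr * (sin (kn*phi)) + pphi * (cos (kn*phi)) / r)) - 4*k0*kn*(cos (kn*phi))*(sin (kn*phi))/(r powr (2*kn))"
    and J11q: "d_pr J11 r phi pr pphi = 2*((r powr n)*(pr*(cos (kn*phi)) + 1/r*pphi*(sin (kn*phi))))*((r powr n) * (cos (kn*phi)))"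
    and J11s: "d_pphi J11 r phi pr pphi = 2*((r powr n)*(pr*(cos (kn*phi)) + 1/r*pphi*(sin (kn*phi))))*((r powr n) * (sin (kn*phi)) / r)"
    and J22r: "d_r J22 r phi pr pphi = 2*((r powr n)*(pr*(sin (kn*phi)) - 1/r*pphi*(cos (kn*phi))))*(n * (r powr n) / r * (pr * (sin (kn*phi)) - pphi * (cos (kn*phi)) / r) + (r powr n) * pphi * (cos (kn*phi)) / r^2) - 4*kn*k0*(sin (kn*phi))^2/(r*(r powr (2*kn)))"
    and J22p: "d_phi J22 r phi pr pphi = 2*((r powr n)*(pr*(sin (kn*phi)) - 1/r*pphi*(cos (kn*phi))))*(kn * (r powr n) * (pr * (cos (kn*phi)) + pphi * (sin (kn*phi)) / r)) + 4*k0*kn*(cos (kn*phi))*(sin (kn*phi))/(r powr (2*kn))"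
    and J22q: "d_pr J22 r phi pr pphi = 2*((r powr n)*(pr*(sin (kn*phi)) - 1/r*pphi*(cos (kn*phi))))*((r powr n) * (sin (kn*phi)))"
    and J22s: "d_pphi J22 r phi pr pphi = 2*((r powr n)*(pr*(sin (kn*phi)) - 1/r*pphi*(cos (kn*phi))))*(-(r powr n) * (cos (kn*phi)) / r)"
    and J12r: "d_r J12 r phi pr pphi = (n * (r powr n) / r * (pr * (cos (kn*phi)) + pphi * (sin (kn*phi)) / r) - (r powr n) * pphi * (sin (kn*phi)) / r^2)*((r powr n)*(pr*(sin (kn*phi)) - 1/r*pphi*(cos (kn*phi)))) + ((r powr n)*(pr*(cos (kn*phi)) + 1/r*pphi*(sin (kn*phi))))*(n * (r powr n) / r * (pr * (sin (kn*phi)) - pphi * (cos (kn*phi)) / r) + (r powr n) * pphi * (cos (kn*phi)) / r^2) - 4*kn*k0*(cos (kn*phi))*(sin (kn*phi))/(r*(r powr (2*kn)))"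
    and J12p: "d_phi J12 r phi pr pphi = (kn * (r powr n) * (- pr * (sin (kn*phi)) + pphi * (cos (kn*phi)) / r))*((r powr n)*(pr*(sin (kn*phi)) - 1/r*pphi*(cos (kn*phi)))) + ((r powr n)*(pr*(cos (kn*phi)) + 1/r*pphi*(sin (kn*phi))))*(kn * (r powr n) * (pr * (cos (kn*phi)) + pphi * (sin (kn*phi)) / r)) + 2*k0*kn*((cos (kn*phi))^2-(sin (kn*phi))^2)/(r powr (2*kn))"
    and J12q: "d_pr J12 r phi pr pphi = ((r powr n) * (cos (kn*phi)))*((r powr n)*(pr*(sin (kn*phi)) - 1/r*pphi*(cos (kn*phi)))) + ((r powr n)*(pr*(cos (kn*phi)) + 1/r*pphi*(sin (kn*phi))))*((r powr n) * (sin (kn*phi)))"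
    and J12s: "d_pphi J12 r phi pr pphi = ((r powr n) * (sin (kn*phi)) / r)*((r powr n)*(pr*(sin (kn*phi)) - 1/r*pphi*(cos (kn*phi)))) + ((r powr n)*(pr*(cos (kn*phi)) + 1/r*pphi*(sin (kn*phi))))*(-(r powr n) * (cos (kn*phi)) / r)"
    and "poisson J11 H r phi pr pphi = 0"
    and "poisson J22 H r phi pr pphi = 0"
    and "poisson J12 H r phi pr pphi = 0"
    and "poisson J11 J22 r phi pr pphi = 0"
proof -
  have tpos: "r powr n > 0" using r by simp
  have nk: "n = kn + 1" using hkn by simp
  have w: "r powr (2*kn) = (r powr n)^2/r^2" proof -
    have "2*kn = 2*n - 2" using hkn by simp
    hence "r powr (2*kn) = r powr (2*n) / r powr 2" using r by (simp add: powr_diff)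
    also have "r powr (2*n) = (r powr n)^2" using r by (simp add: powr_add[symmetric] power2_eq_square algebra_simps)
    finally show ?thesis using r by simp
  qed
  have S2: "r powr (2*n) = (r powr n)^2" using r by (simp add: powr_add[symmetric] power2_eq_square algebra_simps)
  have cs: "(cos (kn*phi))^2 + (sin (kn*phi))^2 = 1" by simp
  show Hr: "d_r H r phi pr pphi = (2*n) * (r powr (2*n)) / r * (pr^2 + pphi^2/r^2)/2 + (r powr (2*n)) * (- 2*pphi^2/r^3)/2 - 2*kn*k0/(r*(r powr (2*kn)))"
    unfolding d_r_def hH
    apply (rule DERIV_imp_deriv)
    apply (rule derivative_eq_intros refl | use r in force)+
    apply (use r hkn in \<open>simp add: field_simps power2_eq_square power3_eq_cube powr_diff\<close>)?
    done
  show Hp: "d_phi H r phi pr pphi = 0"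
    unfolding d_phi_def hH
    apply (rule DERIV_imp_deriv)
    apply (rule derivative_eq_intros refl | use r in force)+
    apply (use r hkn in \<open>simp add: field_simps power2_eq_square power3_eq_cube powr_diff\<close>)?
    done
  show Hq: "d_pr H r phi pr pphi = (r powr (2*n)) * pr"
    unfolding d_pr_def hH
    apply (rule DERIV_imp_deriv)
    apply (rule derivative_eq_intros refl | use r in force)+
    apply (use r hkn in \<open>simp add: field_simps power2_eq_square power3_eq_cube powr_diff\<close>)?
    done
  show Hs: "d_pphi H r phi pr pphi = (r powr (2*n)) * pphi / r^2"
    unfolding d_pphi_def hH
    apply (rule DERIV_imp_deriv)
    apply (rule derivative_eq_intros refl | use r in force)+
    apply (use r hkn in \<open>simp add: field_simps power2_eq_square power3_eq_cube powr_diff\<close>)?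
    done
  show J11r: "d_r J11 r phi pr pphi = 2*((r powr n)*(pr*(cos (kn*phi)) + 1/r*pphi*(sin (kn*phi))))*(n * (r powr n) / r * (pr * (cos (kn*phi)) + pphi * (sin (kn*phi)) / r) - (r powr n) * pphi * (sin (kn*phi)) / r^2) - 4*kn*k0*(cos (kn*phi))^2/(r*(r powr (2*kn)))"
    unfolding d_r_def hJ11
    apply (rule DERIV_imp_deriv)
    apply (rule derivative_eq_intros refl | use r in force)+
    apply (use r hkn in \<open>simp add: field_simps power2_eq_square power3_eq_cube powr_diff\<close>)?
    done
  show J11p: "d_phi J11 r phi pr pphi = 2*((r powr n)*(pr*(cos (kn*phi)) + 1/r*pphi*(sin (kn*phi))))*(kn * (r powr n) * (- pr * (sin (kn*phi)) + pphi * (cos (kn*phi)) / r)) - 4*k0*kn*(cos (kn*phi))*(sin (kn*phi))/(r powr (2*kn))"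
    unfolding d_phi_def hJ11
    apply (rule DERIV_imp_deriv)
    apply (rule derivative_eq_intros refl | use r in force)+
    apply (use r hkn in \<open>simp add: field_simps power2_eq_square power3_eq_cube powr_diff\<close>)?
    done
  show J11q: "d_pr J11 r phi pr pphi = 2*((r powr n)*(pr*(cos (kn*phi)) + 1/r*pphi*(sin (kn*phi))))*((r powr n) * (cos (kn*phi)))"
    unfolding d_pr_def hJ11
    apply (rule DERIV_imp_deriv)
    apply (rule derivative_eq_intros refl | use r in force)+
    apply (use r hkn in \<open>simp add: field_simps power2_eq_square power3_eq_cube powr_diff\<close>)?
    done
  show J11s: "d_pphi J11 r phi pr pphi = 2*((r powr n)*(pr*(cos (kn*phi)) + 1/r*pphi*(sin (kn*phi))))*((r powr n) * (sin (kn*phi)) / r)"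
    unfolding d_pphi_def hJ11
    apply (rule DERIV_imp_deriv)
    apply (rule derivative_eq_intros refl | use r in force)+
    apply (use r hkn in \<open>simp add: field_simps power2_eq_square power3_eq_cube powr_diff\<close>)?
    done
  show J22r: "d_r J22 r phi pr pphi = 2*((r powr n)*(pr*(sin (kn*phi)) - 1/r*pphi*(cos (kn*phi))))*(n * (r powr n) / r * (pr * (sin (kn*phi)) - pphi * (cos (kn*phi)) / r) + (r powr n) * pphi * (cos (kn*phi)) / r^2) - 4*kn*k0*(sin (kn*phi))^2/(r*(r powr (2*kn)))"
    unfolding d_r_def hJ22
    apply (rule DERIV_imp_deriv)
    apply (rule derivative_eq_intros refl | use r in force)+
    apply (use r hkn in \<open>simp add: field_simps power2_eq_square power3_eq_cube powr_diff\<close>)?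
    done
  show J22p: "d_phi J22 r phi pr pphi = 2*((r powr n)*(pr*(sin (kn*phi)) - 1/r*pphi*(cos (kn*phi))))*(kn * (r powr n) * (pr * (cos (kn*phi)) + pphi * (sin (kn*phi)) / r)) + 4*k0*kn*(cos (kn*phi))*(sin (kn*phi))/(r powr (2*kn))"
    unfolding d_phi_def hJ22
    apply (rule DERIV_imp_deriv)
    apply (rule derivative_eq_intros refl | use r in force)+
    apply (use r hkn in \<open>simp add: field_simps power2_eq_square power3_eq_cube powr_diff\<close>)?
    done
  show J22q: "d_pr J22 r phi pr pphi = 2*((r powr n)*(pr*(sin (kn*phi)) - 1/r*pphi*(cos (kn*phi))))*((r powr n) * (sin (kn*phi)))"
    unfolding d_pr_def hJ22
    apply (rule DERIV_imp_deriv)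
    apply (rule derivative_eq_intros refl | use r in force)+
    apply (use r hkn in \<open>simp add: field_simps power2_eq_square power3_eq_cube powr_diff\<close>)?
    done
  show J22s: "d_pphi J22 r phi pr pphi = 2*((r powr n)*(pr*(sin (kn*phi)) - 1/r*pphi*(cos (kn*phi))))*(-(r powr n) * (cos (kn*phi)) / r)"
    unfolding d_pphi_def hJ22
    apply (rule DERIV_imp_deriv)
    apply (rule derivative_eq_intros refl | use r in force)+
    apply (use r hkn in \<open>simp add: field_simps power2_eq_square power3_eq_cube powr_diff\<close>)?
    done
  show J12r: "d_r J12 r phi pr pphi = (n * (r powr n) / r * (pr * (cos (kn*phi)) + pphi * (sin (kn*phi)) / r) - (r powr n) * pphi * (sin (kn*phi)) / r^2)*((r powr n)*(pr*(sin (kn*phi)) - 1/r*pphi*(cos (kn*phi)))) + ((r powr n)*(pr*(cos (kn*phi)) + 1/r*pphi*(sin (kn*phi))))*(n * (r powr n) / r * (pr * (sin (kn*phi)) - pphi * (cos (kn*phi)) / r) + (r powr n) * pphi * (cos (kn*phi)) / r^2) - 4*kn*k0*(cos (kn*phi))*(sin (kn*phi))/(r*(r powr (2*kn)))"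
    unfolding d_r_def hJ12
    apply (rule DERIV_imp_deriv)
    apply (rule derivative_eq_intros refl | use r in force)+
    apply (use r hkn in \<open>simp add: field_simps power2_eq_square power3_eq_cube powr_diff\<close>)?
    done
  show J12p: "d_phi J12 r phi pr pphi = (kn * (r powr n) * (- pr * (sin (kn*phi)) + pphi * (cos (kn*phi)) / r))*((r powr n)*(pr*(sin (kn*phi)) - 1/r*pphi*(cos (kn*phi)))) + ((r powr n)*(pr*(cos (kn*phi)) + 1/r*pphi*(sin (kn*phi))))*(kn * (r powr n) * (pr * (cos (kn*phi)) + pphi * (sin (kn*phi)) / r)) + 2*k0*kn*((cos (kn*phi))^2-(sin (kn*phi))^2)/(r powr (2*kn))"
    unfolding d_phi_def hJ12
    apply (rule DERIV_imp_deriv)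
    apply (rule derivative_eq_intros refl | use r in force)+
    apply (use r hkn in \<open>simp add: field_simps power2_eq_square power3_eq_cube powr_diff\<close>)?
    done
  show J12q: "d_pr J12 r phi pr pphi = ((r powr n) * (cos (kn*phi)))*((r powr n)*(pr*(sin (kn*phi)) - 1/r*pphi*(cos (kn*phi)))) + ((r powr n)*(pr*(cos (kn*phi)) + 1/r*pphi*(sin (kn*phi))))*((r powr n) * (sin (kn*phi)))"
    unfolding d_pr_def hJ12
    apply (rule DERIV_imp_deriv)
    apply (rule derivative_eq_intros refl | use r in force)+
    apply (use r hkn in \<open>simp add: field_simps power2_eq_square power3_eq_cube powr_diff\<close>)?
    done
  show J12s: "d_pphi J12 r phi pr pphi = ((r powr n) * (sin (kn*phi)) / r)*((r powr n)*(pr*(sin (kn*phi)) - 1/r*pphi*(cos (kn*phi)))) + ((r powr n)*(pr*(cos (kn*phi)) + 1/r*pphi*(sin (kn*phi))))*(-(r powr n) * (cos (kn*phi)) / r)"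
    unfolding d_pphi_def hJ12
    apply (rule DERIV_imp_deriv)
    apply (rule derivative_eq_intros refl | use r in force)+
    apply (use r hkn in \<open>simp add: field_simps power2_eq_square power3_eq_cube powr_diff\<close>)?
    done
  show "poisson J11 H r phi pr pphi = 0"
    unfolding poisson_def by (rule alg(1)[OF r tpos cs nk w S2 refl refl refl refl refl refl refl refl refl refl Hr Hp Hq Hs J11r J11p J11q J11s J22r J22p J22q J22s J12r J12p J12q J12s])
  show "poisson J22 H r phi pr pphi = 0"
    unfolding poisson_def by (rule alg(2)[OF r tpos cs nk w S2 refl refl refl refl refl refl refl refl refl refl Hr Hp Hq Hs J11r J11p J11q J11s J22r J22p J22q J22s J12r J12p J12q J12s])
  show "poisson J12 H r phi pr pphi = 0"
    unfolding poisson_def by (rule alg(3)[OF r tpos cs nk w S2 refl refl refl refl refl refl refl refl refl refl Hr Hp Hq Hs J11r J11p J11q J11s J22r J22p J22q J22s J12r J12p J12q J12s])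
  show "poisson J11 J22 r phi pr pphi = 0"
    unfolding poisson_def by (rule alg(4)[OF r tpos cs nk w S2 refl refl refl refl refl refl refl refl refl refl Hr Hp Hq Hs J11r J11p J11q J11s J22r J22p J22q J22s J12r J12p J12q J12s])
qed


lemma wedge_perm: assumes "wedge3_nonzero F1 F2 F3" shows "wedge3_nonzero F2 F3 F1"
proof -
  from assms obtain r phi pr pphi where r: "r>0" and h: "\<forall>a b c. (\<forall>D \<in> {d_r, d_phi, d_pr, d_pphi}.
          a * D F1 r phi pr pphi + b * D F2 r phi pr pphi + c * D F3 r phi pr pphi = 0)
        \<longrightarrow> a = 0 \<and> b = 0 \<and> c = 0" unfolding wedge3_nonzero_def by blast
  show ?thesis unfolding wedge3_nonzero_def
    apply (rule exI[of _ r], rule exI[of _ phi], rule exI[of _ pr], rule exI[of _ pphi])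
    apply (rule conjI[OF r], intro allI impI)
    subgoal premises p for a b c
    proof -
      have q: "\<forall>D\<in>{d_r, d_phi, d_pr, d_pphi}. c * D F1 r phi pr pphi + a * D F2 r phi pr pphi + b * D F3 r phi pr pphi = 0"
      proof
        fix D assume "D \<in> {d_r, d_phi, d_pr, d_pphi}"
        with p have "a * D F2 r phi pr pphi + b * D F3 r phi pr pphi + c * D F1 r phi pr pphi = 0" by blast
        thus "c * D F1 r phi pr pphi + a * D F2 r phi pr pphi + b * D F3 r phi pr pphi = 0" by linarith
      qed
      from h q show ?thesis by blast
    qed
    done
qed

theorem mainTheorem1:
  fixes n k0 kn :: real and H P1 P2 J1 J11 J22 J12 :: pfun
  assumes hn: "n \<noteq> 1"
    and hkn: "kn = n - 1"
    and hH: "H = (\<lambda>r phi pr pphi. 1/2 * r powr (2*n) * (pr^2 + pphi^2 / r^2) + k0 / r powr (2*kn))"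
    and hP1: "P1 = (\<lambda>r phi pr pphi. r powr n * (pr * cos (kn*phi) + 1/r * pphi * sin (kn*phi)))"
    and hP2: "P2 = (\<lambda>r phi pr pphi. r powr n * (pr * sin (kn*phi) - 1/r * pphi * cos (kn*phi)))"
    and hJ1: "J1 = (\<lambda>r phi pr pphi. pphi)"
    and hJ11: "J11 = (\<lambda>r phi pr pphi. (P1 r phi pr pphi)^2 + 2*k0 / r powr (2*kn) * (cos (kn*phi))^2)"
    and hJ22: "J22 = (\<lambda>r phi pr pphi. (P2 r phi pr pphi)^2 + 2*k0 / r powr (2*kn) * (sin (kn*phi))^2)"
    and hJ12: "J12 = (\<lambda>r phi pr pphi. P1 r phi pr pphi * P2 r phi pr pphi
                        + 2*k0 / r powr (2*kn) * cos (kn*phi) * sin (kn*phi))"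
  shows "const_of_motion J1 H \<and> const_of_motion J11 H \<and> const_of_motion J22 H \<and> const_of_motion J12 H
    \<and> wedge3_nonzero J1 J11 J22
    \<and> (\<forall>r phi pr pphi. r > 0 \<longrightarrow> poisson J11 J22 r phi pr pphi = 0)
    \<and> (\<forall>r phi pr pphi. r > 0 \<longrightarrow> H r phi pr pphi = 1/2 * (J11 r phi pr pphi + J22 r phi pr pphi))
    \<and> superintegrable H"
proof -
  have hJ11': "J11 = (\<lambda>r phi pr pphi. (r powr n * (pr * cos (kn*phi) + 1/r * pphi * sin (kn*phi)))^2 + 2*k0 / r powr (2*kn) * (cos (kn*phi))^2)"
    using hJ11 hP1 by simp
  have hJ22': "J22 = (\<lambda>r phi pr pphi. (r powr n * (pr * sin (kn*phi) - 1/r * pphi * cos (kn*phi)))^2 + 2*k0 / r powr (2*kn) * (sin (kn*phi))^2)"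
    using hJ22 hP2 by simp
  have hJ12': "J12 = (\<lambda>r phi pr pphi. (r powr n * (pr * cos (kn*phi) + 1/r * pphi * sin (kn*phi))) * (r powr n * (pr * sin (kn*phi) - 1/r * pphi * cos (kn*phi)))
                        + 2*k0 / r powr (2*kn) * cos (kn*phi) * sin (kn*phi))"
    using hJ12 hP1 hP2 by simp
  note P = point[OF _ hkn hH hJ11' hJ22' hJ12']
  have kn0: "kn \<noteq> 0" using hn hkn by simp
  have dJ1: "d_r J1 r phi pr pphi = 0" "d_phi J1 r phi pr pphi = 0" "d_pr J1 r phi pr pphi = 0"
     "d_pphi J1 r phi pr pphi = 1" for r phi pr pphi
    unfolding d_r_def d_phi_def d_pr_def d_pphi_def hJ1
    by (rule DERIV_imp_deriv, rule derivative_eq_intros refl | simp)+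
  have c1: "const_of_motion J1 H"
    unfolding const_of_motion_def poisson_def dJ1 using P(2) by simp
  have c11: "const_of_motion J11 H" unfolding const_of_motion_def using P(17) by blast
  have c22: "const_of_motion J22 H" unfolding const_of_motion_def using P(18) by blast
  have c12: "const_of_motion J12 H" unfolding const_of_motion_def using P(19) by blast
  have pb: "\<forall>r phi pr pphi. r > 0 \<longrightarrow> poisson J11 J22 r phi pr pphi = 0" using P(20) by blast
  have w: "wedge3_nonzero J1 J11 J22"
    unfolding wedge3_nonzero_def
  proof (rule exI[of _ 1], rule exI[of _ 0], rule exI[of _ 1], rule exI[of _ 1], rule conjI[OF zero_less_one], intro allI impI)
    fix a b c
    assume h: "\<forall>D\<in>{d_r, d_phi, d_pr, d_pphi}. a * D J1 1 0 1 1 + b * D J11 1 0 1 1 + c * D J22 1 0 1 1 = 0"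
    have e1: "a * d_pr J1 1 0 1 1 + b * d_pr J11 1 0 1 1 + c * d_pr J22 1 0 1 1 = 0" using h by blast
    have e2: "a * d_phi J1 1 0 1 1 + b * d_phi J11 1 0 1 1 + c * d_phi J22 1 0 1 1 = 0" using h by blast
    have e3: "a * d_pphi J1 1 0 1 1 + b * d_pphi J11 1 0 1 1 + c * d_pphi J22 1 0 1 1 = 0" using h by blast
    have b0: "b = 0" using e1 P(7)[of 1 0 1 1] P(11)[of 1 0 1 1] by (simp add: dJ1)
    have c0: "c = 0" using e2 kn0 P(6)[of 1 0 1 1] P(10)[of 1 0 1 1] b0 by (simp add: dJ1)
    have a0: "a = 0" using e3 P(8)[of 1 0 1 1] P(12)[of 1 0 1 1] b0 c0 by (simp add: dJ1)
    show "a = 0 \<and> b = 0 \<and> c = 0" using a0 b0 c0 by simp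
  qed
  have hs: "\<forall>r phi pr pphi. r > 0 \<longrightarrow> H r phi pr pphi = 1/2 * (J11 r phi pr pphi + J22 r phi pr pphi)"
  proof (intro allI impI)
    fix r phi pr pphi :: real assume r: "r > 0"
    have S2: "r powr (2*n) = (r powr n)^2" using r by (simp add: powr_add[symmetric] power2_eq_square algebra_simps)
    have cs: "(cos (kn*phi))^2 + (sin (kn*phi))^2 = 1" by simp
    have "\<And>t c b w::real. c^2+b^2 = 1 \<Longrightarrow> w \<noteq> 0 \<Longrightarrow> 1/2 * t^2 * (pr^2 + pphi^2 / r^2) + k0 / w =
       1/2 * ((t * (pr * c + 1/r * pphi * b))^2 + 2*k0 / w * c^2 + ((t * (pr * b - 1/r * pphi * c))^2 + 2*k0 / w * b^2))"
      using r by (simp add: field_simps power2_eq_square; algebra)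
    from this[OF cs, of "r powr (2*kn)" "r powr n"] r
    show "H r phi pr pphi = 1/2 * (J11 r phi pr pphi + J22 r phi pr pphi)"
      unfolding hH hJ11' hJ22' S2 by simp
  qed
  have smooth: "smooth_enough J1 \<and> smooth_enough J11 \<and> smooth_enough J22"
    unfolding smooth_enough_def hJ1 hJ11' hJ22' real_differentiable_def
    apply (intro conjI allI impI exI)
    apply (rule derivative_eq_intros refl | force)+
    done
  have si: "superintegrable H"
    unfolding superintegrable_def
    apply (rule exI[of _ J11], rule exI[of _ J22], rule exI[of _ J1])
    using smooth c1 c11 c22 pb wedge_perm[OF w] by blast
  show ?thesis using c1 c11 c22 c12 w pb hs si by blast
qed

end
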